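(* Let $T$ be a Borel automorphism of a separable metric space $(X,\rho)$ and let $\mathfrak{s}=\{h_1,\dots,h_n\}$ be a nontrivial primitive signature. Then for every $\varepsilon>0$ there exist Borel subsets $B_1,\dots,B_n\subset X$ such that: (1) the towers $\mathcal{R}_{h_i}[B_i]$, $i=1,\dots,n$, are full and pairwise disjoint; (2) $T$ maps the set $\bigcup_{i=1}^n\bar{\mathcal{R}}_{h_i}[B_i]$ bijectively onto itself; (3) for every $\mu\in M_{\mathrm{ap}}(X,T)$, $$\sum_{i=1}^n\mu\big(\bar{\mathcal{R}}_{h_i}[B_i]\big)=1,\qquad \sum_{i=1}^n\mu(B_i)<\tfrac12+\varepsilon.$$
   Context: A Borel automorphism is an invertible map with $T$ and $T^{-1}$ Borel measurable. $M_{\mathrm{ap}}(X,T)$ is the set of $T$-invariant Borel probability measures on $X$ giving measure zero to the set of $T$-periodic points. A signature is a finite nonempty set $\mathfrak{s}\subset\mathbb{N}$ of positive integers; it is primitive if its elements are jointly coprime, and trivial if $\mathfrak{s}=\{1\}$. For a Borel set $B\subset X$, the Rokhlin tower with base $B$ is the sequence of sets $B_0=B$, $B_k=TB_{k-1}\setminus B_0$ ($k\ge1$); for $h\in\mathbb{N}$ the tower $\mathcal{R}_h[B]$ of height $h$ consists of the levels $B_0,\dots,B_{h-1}$, and $\bar{\mathcal{R}}_h[B]=\bigcup_{k=0}^{h-1}B_k$. The tower $\mathcal{R}_h[B]$ is full if $B_k=T^kB$ for $k=0,\dots,h-1$ (and the levels are pairwise disjoint). Two towers are disjoint if their unions $\bar{\mathcal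 R}$ are disjoint. *)

theory Defs
  imports "HOL-Probability.Probability"
begin

definition borel_automorphism :: "('a::topological_space \<Rightarrow> 'a) \<Rightarrow> bool" where
  "borel_automorphism T \<longleftrightarrow> bij T \<and> T \<in> borel_measurable borel \<and> inv T \<in> borel_measurable borel"

definition periodic_points :: "('a \<Rightarrow> 'a) \<Rightarrow> 'a set" where
  "periodic_points T = {x. \<exists>n\<ge>1. (T ^^ n) x = x}"

definition M_ap :: "('a::topological_space \<Rightarrow> 'a) \<Rightarrow> 'a measure set" where
  "M_ap T = {M. prob_space M \<and> sets M = sets borel \<and>
              (\<forall>A\<in>sets borel. emeasure M (T -` A) = emeasure M A) \<and>
              periodic_points T \<in> null_sets M}"

definition signature :: "nat set \<Rightarrow> bool" where
  "signature s \<longleftrightarrow> finite s \<and> s \<noteq> {} \<and> 0 \<notin> s"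

definition primitive_signature :: "nat set \<Rightarrow> bool" where
  "primitive_signature s \<longleftrightarrow> signature s \<and> Gcd s = 1"

definition trivial_signature :: "nat set \<Rightarrow> bool" where
  "trivial_signature s \<longleftrightarrow> s = {1}"

fun tower_level :: "('a \<Rightarrow> 'a) \<Rightarrow> 'a set \<Rightarrow> nat \<Rightarrow> 'a set" where
  "tower_level T B 0 = B"
| "tower_level T B (Suc k) = T ` tower_level T B k - B"

definition tower_union :: "('a \<Rightarrow> 'a) \<Rightarrow> nat \<Rightarrow> 'a set \<Rightarrow> 'a set" where
  "tower_union T h B = (\<Union>k<h. tower_level T B k)"

definition full_tower :: "('a \<Rightarrow> 'a) \<Rightarrow> nat \<Rightarrow> 'a set \<Rightarrow> bool" where
  "full_tower T h B \<longleftrightarrow>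
     (\<forall>k<h. tower_level T B k = (T ^^ k) ` B) \<and>
     (\<forall>j<h. \<forall>k<h. j \<noteq> k \<longrightarrow> tower_level T B j \<inter> tower_level T B k = {})"

end

theory Submission
  imports Defs
begin


locale BA =
  fixes T :: "'a::{metric_space,second_countable_topology} \<Rightarrow> 'a"
  assumes ba: "borel_automorphism T"
begin

definition Ti where "Ti = inv T"

lemma bijT: "bij T" using ba by (simp add: borel_automorphism_def)
lemma T_Ti[simp]: "T (Ti x) = x" unfolding Ti_def using bijT by (simp add: bij_is_surj surj_f_inv_f)
lemma Ti_T[simp]: "Ti (T x) = x" unfolding Ti_def using bijT by (simp add: bij_is_inj inv_f_f)
lemma injT: "inj T" using bijT bij_is_inj by blast

lemma Tn_Tin[simp]: "(T^^n) ((Ti^^n) x) = x"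
proof (induction n arbitrary: x)
  case (Suc n)
  have "(T^^Suc n) ((Ti^^Suc n) x) = (T^^n) (T (Ti ((Ti^^n) x)))"
    by (simp add: funpow_swap1)
  then show ?case using Suc by simp
qed simp
lemma Tin_Tn[simp]: "(Ti^^n) ((T^^n) x) = x"
proof (induction n arbitrary: x)
  case (Suc n)
  have "(Ti^^Suc n) ((T^^Suc n) x) = (Ti^^n) (Ti (T ((T^^n) x)))"
    by (simp add: funpow_swap1)
  then show ?case using Suc by simp
qed simp

lemma Tn_inj: "(T^^n) x = (T^^n) y \<longleftrightarrow> x = y"
  by (metis Tin_Tn)

lemma meas_T[measurable]: "T \<in> borel_measurable borel" using ba by (simp add: borel_automorphism_def)
lemma meas_Ti[measurable]: "Ti \<in> borel_measurable borel" using ba by (simp add: borel_automorphism_def Ti_def)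

lemma meas_Tn[measurable]: "(T^^n) \<in> borel_measurable borel"
  by (induction n) (auto simp: measurable_ident)
lemma meas_Tin[measurable]: "(Ti^^n) \<in> borel_measurable borel"
  by (induction n) (auto simp: measurable_ident)

lemma vimT: "S \<in> sets borel \<Longrightarrow> (T^^i) -` S \<in> sets borel"
  using measurable_sets[OF meas_Tn, of S] by simp
lemma vimTi: "S \<in> sets borel \<Longrightarrow> (Ti^^i) -` S \<in> sets borel"
  using measurable_sets[OF meas_Tin, of S] by simp

lemma img_Tn: "(T^^n) ` S = (Ti^^n) -` S"
  by (auto simp: image_iff) (metis Tn_Tin)

lemma Tadd: "(T^^m) ((T^^n) x) = (T^^(m+n)) x" by (simp add: funpow_add)

end


definition rep :: "nat set \<Rightarrow> nat \<Rightarrow> bool" where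
  "rep s N \<longleftrightarrow> (\<exists>xs. set xs \<subseteq> s \<and> sum_list xs = N)"

lemma rep0: "rep s 0" unfolding rep_def by (rule exI[of _ "[]"]) simp
lemma rep_elem: "h \<in> s \<Longrightarrow> rep s h" unfolding rep_def by (rule exI[of _ "[h]"]) simp
lemma rep_add: "rep s a \<Longrightarrow> rep s b \<Longrightarrow> rep s (a+b)"
  unfolding rep_def by (metis set_append sum_list_append Un_subset_iff)
lemma rep_mult: "rep s a \<Longrightarrow> rep s (k*a)"
  by (induction k) (auto simp: rep0 rep_add)

lemma rep_bezout:
  assumes "finite s" "0 \<notin> s"
  shows "\<exists>P Q. rep s P \<and> rep s Q \<and> P = Q + Gcd s"
  using assms
proof (induction s rule: finite_induct)
  case empty then show ?case using rep0 by auto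
next
  case (insert a F)
  then obtain P1 Q1 where pq: "rep F P1" "rep F Q1" "P1 = Q1 + Gcd F" by auto
  have mono: "rep F n \<Longrightarrow> rep (insert a F) n" for n
    unfolding rep_def by blast
  have "a \<noteq> 0" using insert by auto
  then obtain x y where xy: "a * x = Gcd F * y + gcd a (Gcd F)" using bezout_nat by blast
  have "a*x + y*Q1 = y*P1 + gcd a (Gcd F)" using xy pq(3) by (simp add: algebra_simps)
  moreover have "rep (insert a F) (a*x)"
    by (simp add: mult.commute[of a x] rep_mult rep_elem)
  moreover have "rep (insert a F) (a*x + y*Q1)"
    by (rule rep_add[OF calculation(2) rep_mult[OF mono[OF pq(2)]]])
  moreover have "rep (insert a F) (y*P1)" by (intro rep_mult mono pq)
  ultimately show ?case by auto
qed

lemma frobenius: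
  assumes "finite s" "0 \<notin> s" "Gcd s = 1"
  shows "\<exists>L0. \<forall>N\<ge>L0. rep s N"
proof -
  obtain P Q where pq: "rep s P" "rep s Q" "P = Q + 1" using rep_bezout assms by force
  show ?thesis
  proof (cases "Q = 0")
    case True
    then have "rep s 1" using pq by simp
    then have "rep s (N*1)" for N by (rule rep_mult)
    then show ?thesis by auto
  next
    case False
    show ?thesis
    proof (rule exI[of _ "Q*Q"], intro allI impI)
      fix N assume N: "N \<ge> Q*Q"
      define a where "a = N div Q"
      define b where "b = N mod Q"
      have "b < Q" using False b_def by simp
      have "Q*Q div Q \<le> N div Q" using N by (rule div_le_mono)
      then have "a \<ge> Q" using False unfolding a_def by simp
      have e1: "N = a*Q + b" unfolding a_def b_def by simp
      have "b \<le> a" using \<open>b < Q\<close> \<open>a \<ge> Q\<close> by linarith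
      then have e2: "(a-b)*Q + b*Q = a*Q" by (simp add: add_mult_distrib[symmetric])
      have e3: "b*P = b*Q + b" using pq(3) by simp
      have "N = (a - b) * Q + b * P" using e1 e2 e3 by linarith
      then show "rep s N" using pq by (metis rep_add rep_mult)
    qed
  qed
qed

lemma dec_exists:
  assumes "primitive_signature s" "\<not> trivial_signature s"
  shows "\<exists>C L0 dec. \<forall>N\<ge>L0. set (dec N) \<subseteq> s \<and> sum_list (dec N) = N \<and>
           (\<forall>j<length (dec N). dec N ! j = 1 \<longrightarrow> sum_list (take j (dec N)) < (C::nat))"
proof -
  have fs: "finite s" "0 \<notin> s" "s \<noteq> {}" "Gcd s = 1" "s \<noteq> {1}"
    using assms by (auto simp: primitive_signature_def signature_def trivial_signature_def)
  show ?thesis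
  proof (cases "1 \<in> s")
    case True
    then obtain m where m: "m \<in> s" "m \<noteq> 1" using fs by blast
    then have "m \<ge> 2" using fs by (cases m) auto
    define dec where "dec N = replicate (N mod m) (1::nat) @ replicate (N div m) m" for N
    have "\<forall>N\<ge>0. set (dec N) \<subseteq> s \<and> sum_list (dec N) = N \<and>
           (\<forall>j<length (dec N). dec N ! j = 1 \<longrightarrow> sum_list (take j (dec N)) < m)"
    proof (intro allI impI)
      fix N :: nat
      have 1: "set (dec N) \<subseteq> s" using True m by (auto simp: dec_def)
      have 2: "sum_list (dec N) = N" by (simp add: dec_def sum_list_replicate)
      have "\<forall>j<length (dec N). dec N ! j = 1 \<longrightarrow> sum_list (take j (dec N)) < m"
      proof (intro allI impI)
        fix j assume j: "j < length (dec N)" "dec N ! j = 1"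
        have "j < N mod m"
        proof (rule ccontr)
          assume "\<not> j < N mod m"
          then have "dec N ! j = m" using j(1) by (simp add: dec_def nth_append)
          then show False using j(2) m by simp
        qed
        then have "take j (dec N) = replicate j 1" by (simp add: dec_def take_append)
        moreover have "N mod m < m" using \<open>m \<ge> 2\<close> by simp
        ultimately show "sum_list (take j (dec N)) < m"
          using \<open>j < N mod m\<close> by (simp add: sum_list_replicate)
      qed
      then show "set (dec N) \<subseteq> s \<and> sum_list (dec N) = N \<and>
           (\<forall>j<length (dec N). dec N ! j = 1 \<longrightarrow> sum_list (take j (dec N)) < m)" using 1 2 by blast
    qed
    then show ?thesis by blast
  next
    case False
    obtain L0 where L0: "\<forall>N\<ge>L0. rep s N" using frobenius fs by blast
    define dec where "dec N = (SOME xs. set xs \<subseteq> s \<and> sum_list xs = N)" for N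
    have "\<forall>N\<ge>L0. set (dec N) \<subseteq> s \<and> sum_list (dec N) = N \<and>
           (\<forall>j<length (dec N). dec N ! j = 1 \<longrightarrow> sum_list (take j (dec N)) < 0)"
    proof (intro allI impI)
      fix N assume "N \<ge> L0"
      then have "\<exists>xs. set xs \<subseteq> s \<and> sum_list xs = N" using L0 unfolding rep_def by blast
      then have r: "set (dec N) \<subseteq> s \<and> sum_list (dec N) = N"
        unfolding dec_def by (rule someI_ex)
      moreover have "\<forall>j<length (dec N). dec N ! j \<noteq> 1"
        using r False by (metis nth_mem subsetD)
      ultimately show "set (dec N) \<subseteq> s \<and> sum_list (dec N) = N \<and>
           (\<forall>j<length (dec N). dec N ! j = 1 \<longrightarrow> sum_list (take j (dec N)) < 0)" by blast
    qed
    then show ?thesis by blast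
  qed
qed


context BA begin

definition Sep :: "nat \<Rightarrow> 'a set \<Rightarrow> bool" where
  "Sep L S \<longleftrightarrow> (\<forall>x\<in>S. \<forall>i\<in>{1..<L}. (T^^i) x \<notin> S)"

lemma marker:
  "\<exists>A\<in>sets borel. Sep L A \<and> (\<forall>x. x \<notin> periodic_points T \<longrightarrow> (\<exists>i. (T^^i) x \<in> A \<or> (Ti^^i) x \<in> A))"
proof -
  obtain Bs :: "'a set set" where Bs: "countable Bs" "topological_basis Bs"
    using ex_countable_basis by blast
  obtain B0 where "B0 \<in> Bs" "undefined \<in> B0" "B0 \<subseteq> UNIV"
    using topological_basisE[OF Bs(2) open_UNIV, of undefined] by blast
  then have ne: "Bs \<noteq> {}" by blast
  define U where "U = from_nat_into Bs"
  have rU: "range U = Bs" unfolding U_def using Bs(1) ne by (simp add: range_from_nat_into)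
  have Uo: "open (U n)" for n using rU Bs(2) topological_basis_open by blast
  have Ub[measurable]: "U n \<in> sets borel" for n using Uo by simp
  define V where "V n = U n - (\<Union>i\<in>{1..<L}. (T^^i)-`U n \<union> (Ti^^i)-`U n)" for n
  have Vb[measurable]: "V n \<in> sets borel" for n unfolding V_def
    by (auto intro!: sets.Diff sets.finite_UN sets.Un vimT vimTi)
  define Nb where "Nb S = (\<Union>i\<in>{..<L}. (T^^i)-`S \<union> (Ti^^i)-`S)" for S
  have Nbb: "S \<in> sets borel \<Longrightarrow> Nb S \<in> sets borel" for S unfolding Nb_def
    by (auto intro!: sets.finite_UN sets.Un vimT vimTi)
  define Aseq where "Aseq = rec_nat {} (\<lambda>n S. S \<union> (V n - Nb S))"
  have A0: "Aseq 0 = {}" and AS: "Aseq (Suc n) = Aseq n \<union> (V n - Nb (Aseq n))" for n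
    unfolding Aseq_def by simp_all
  have Ab: "Aseq n \<in> sets borel" for n
    by (induction n) (auto simp: A0 AS intro!: Nbb sets.Un sets.Diff Vb)
  have incA: "incseq Aseq" by (rule incseq_SucI) (simp add: AS)
  have SepV: "Sep L (V n)" for n
    unfolding Sep_def
  proof (intro ballI)
    fix x i assume x: "x \<in> V n" and i: "i \<in> {1..<L}"
    show "(T^^i) x \<notin> V n"
    proof
      assume "(T^^i) x \<in> V n"
      then have "(Ti^^i) ((T^^i) x) \<notin> U n" using i unfolding V_def by blast
      then show False using x unfolding V_def by simp
    qed
  qed
  have SepA: "Sep L (Aseq n)" for n
  proof (induction n)
    case 0 then show ?case by (simp add: A0 Sep_def)
  next
    case (Suc n)
    show ?case unfolding Sep_def AS
    proof (intro ballI)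
      fix x i assume x: "x \<in> Aseq n \<union> (V n - Nb (Aseq n))" and i: "i \<in> {1..<L}"
      show "(T^^i) x \<notin> Aseq n \<union> (V n - Nb (Aseq n))"
      proof
        assume y: "(T^^i) x \<in> Aseq n \<union> (V n - Nb (Aseq n))"
        have iL: "i < L" using i by simp
        show False
        proof (cases "x \<in> Aseq n")
          case True
          show False
          proof (cases "(T^^i) x \<in> Aseq n")
            case True
            then show False using Suc \<open>x \<in> Aseq n\<close> i unfolding Sep_def by blast
          next
            case False
            then have "(T^^i) x \<notin> Nb (Aseq n)" using y by blast
            moreover have "(Ti^^i) ((T^^i) x) \<in> Aseq n" using \<open>x \<in> Aseq n\<close> by simp
            ultimately show False using iL unfolding Nb_def by blast
          qed
        next
          case False
          then have xV: "x \<in> V n" "x \<notin> Nb (Aseq n)" using x by auto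
          show False
          proof (cases "(T^^i) x \<in> Aseq n")
            case True
            then show False using xV iL unfolding Nb_def by blast
          next
            case False
            then have "(T^^i) x \<in> V n" using y by blast
            then show False using SepV[of n] xV i unfolding Sep_def by blast
          qed
        qed
      qed
    qed
  qed
  define A where "A = (\<Union>n. Aseq n)"
  have "A \<in> sets borel" unfolding A_def using Ab by blast
  moreover have "Sep L A" unfolding Sep_def A_def
  proof (intro ballI)
    fix x i assume "x \<in> (\<Union>n. Aseq n)" "i \<in> {1..<L}"
    then obtain p where p: "x \<in> Aseq p" by blast
    show "(T^^i) x \<notin> (\<Union>n. Aseq n)"
    proof
      assume "(T^^i) x \<in> (\<Union>n. Aseq n)"
      then obtain q where q: "(T^^i) x \<in> Aseq q" by blast
      have "x \<in> Aseq (max p q)" "(T^^i) x \<in> Aseq (max p q)"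
        using p q incseqD[OF incA, of p "max p q"] incseqD[OF incA, of q "max p q"] by auto
      then show False using SepA[of "max p q"] \<open>i \<in> {1..<L}\<close> unfolding Sep_def by blast
    qed
  qed
  moreover have "\<forall>x. x \<notin> periodic_points T \<longrightarrow> (\<exists>i. (T^^i) x \<in> A \<or> (Ti^^i) x \<in> A)"
  proof (intro allI impI)
    fix x assume ap: "x \<notin> periodic_points T"
    define F where "F = (\<lambda>i. (T^^i) x) ` {1..<L} \<union> (\<lambda>i. (Ti^^i) x) ` {1..<L}"
    have "finite F" unfolding F_def by simp
    then have "open (- F)" by (simp add: open_Compl finite_imp_closed)
    moreover have "x \<notin> F"
    proof
      assume "x \<in> F"
      then obtain i where i: "i \<ge> 1" "(T^^i) x = x \<or> (Ti^^i) x = x" unfolding F_def by auto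
      then have "(T^^i) x = x" by (metis Tn_Tin)
      then show False using ap i(1) unfolding periodic_points_def by blast
    qed
    ultimately obtain B' where B': "B' \<in> Bs" "x \<in> B'" "B' \<subseteq> - F"
      using topological_basisE[OF Bs(2)] by blast
    then obtain n where n: "U n = B'" using rU by blast
    have xV: "x \<in> V n"
      unfolding V_def using B' n unfolding F_def by auto
    show "\<exists>i. (T^^i) x \<in> A \<or> (Ti^^i) x \<in> A"
    proof (cases "x \<in> Nb (Aseq n)")
      case True
      then show ?thesis unfolding Nb_def A_def by blast
    next
      case False
      then have "x \<in> Aseq (Suc n)" using xV AS by blast
      then have "(T^^0) x \<in> A" unfolding A_def by auto
      then show ?thesis by blast
    qed
  qed
  ultimately show ?thesis by blast
qed

end


lemma null_forward:
  fixes f g :: "'a::topological_space \<Rightarrow> 'a"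
  assumes fm: "finite_measure M" and sM: "sets M = sets borel"
    and fmeas: "\<And>n. (f^^n) \<in> borel_measurable borel"
    and gmeas: "\<And>n. (g^^n) \<in> borel_measurable borel"
    and pres: "\<And>n S. S \<in> sets borel \<Longrightarrow> measure M ((g^^n)-`S) = measure M S"
    and fg: "\<And>x. f (g x) = x"
    and Ab: "A \<in> sets borel" and P: "P \<in> null_sets M"
    and cover: "\<And>x. (\<forall>n. (f^^n) x \<notin> A) \<Longrightarrow> (\<forall>n. (g^^n) x \<notin> A) \<Longrightarrow> x \<in> P"
  shows "measure M {x. \<forall>n. (f^^n) x \<notin> A} = 0"
proof -
  interpret finite_measure M by (rule fm)
  define F0 where "F0 = {x. \<forall>n. (f^^n) x \<notin> A}"
  have vf: "S \<in> sets borel \<Longrightarrow> (f^^n) -` S \<in> sets borel" for S n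
    using measurable_sets[OF fmeas, of S] by simp
  have vg: "S \<in> sets borel \<Longrightarrow> (g^^n) -` S \<in> sets borel" for S n
    using measurable_sets[OF gmeas, of S] by simp
  have "F0 = (\<Inter>n. (f^^n) -` (- A))" unfolding F0_def by auto
  then have F0b: "F0 \<in> sets borel" using Ab vf by auto
  define D where "D n = (g^^n) -` F0" for n
  have Db: "D n \<in> sets M" for n unfolding D_def sM using vg F0b by simp
  have Dm: "measure M (D n) = measure M F0" for n unfolding D_def using pres F0b by simp
  have fgn: "(f^^Suc m) (g y) = (f^^m) y" for m y
    by (simp only: funpow_Suc_right comp_apply fg)
  have dec: "decseq D"
  proof (rule decseq_SucI)
    fix n show "D (Suc n) \<subseteq> D n"
    proof
      fix x assume "x \<in> D (Suc n)"
      then have h: "\<forall>m. (f^^m) (g ((g^^n) x)) \<notin> A" unfolding D_def F0_def by simp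
      show "x \<in> D n" unfolding D_def F0_def
      proof (simp, intro allI)
        fix m show "(f^^m) ((g^^n) x) \<notin> A" using h[rule_format, of "Suc m"] unfolding fgn .
      qed
    qed
  qed
  have lim: "(\<lambda>n. measure M (D n)) \<longlonglongrightarrow> measure M (\<Inter>n. D n)"
    by (rule finite_Lim_measure_decseq) (use Db dec in auto)
  then have eq: "measure M F0 = measure M (\<Inter>n. D n)" using Dm
    by (simp add: LIMSEQ_const_iff)
  have sub: "(\<Inter>n. D n) \<subseteq> P"
  proof
    fix x assume "x \<in> (\<Inter>n. D n)"
    then have h: "\<forall>n m. (f^^m) ((g^^n) x) \<notin> A" unfolding D_def F0_def by auto
    show "x \<in> P"
    proof (rule cover)
      have "\<forall>m. (f^^m) ((g^^0) x) \<notin> A" using h by blast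
      then show "\<forall>n. (f^^n) x \<notin> A" by simp
      have "\<forall>m. (f^^0) ((g^^m) x) \<notin> A" using h by blast
      then show "\<forall>n. (g^^n) x \<notin> A" by simp
    qed
  qed
  have "measure M (\<Inter>n. D n) \<le> measure M P"
    by (rule finite_measure_mono[OF sub]) (use P in auto)
  moreover have "measure M P = 0" using P by (simp add: measure_def null_setsD1)
  ultimately have "measure M (\<Inter>n. D n) = 0" using measure_nonneg[of M "\<Inter>n. D n"] by linarith
  then show ?thesis using eq unfolding F0_def by simp
qed

context BA begin

lemma Map_basic:
  assumes "M \<in> M_ap T"
  shows "prob_space M" "sets M = sets borel" "space M = UNIV" "periodic_points T \<in> null_sets M"
    "\<And>S. S \<in> sets borel \<Longrightarrow> emeasure M (T -` S) = emeasure M S"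
  using assms unfolding M_ap_def by (auto dest: sets_eq_imp_space_eq)

lemma pres_e:
  assumes "M \<in> M_ap T" "S \<in> sets borel"
  shows "emeasure M ((T^^n) -` S) = emeasure M S" "emeasure M ((Ti^^n) -` S) = emeasure M S"
proof -
  note b = Map_basic[OF assms(1)]
  have Ti1: "emeasure M (Ti -` S) = emeasure M S" if "S \<in> sets borel" for S
  proof -
    have "Ti -` S \<in> sets borel" using vimTi[OF that, of 1] by simp
    then have "emeasure M (T -` (Ti -` S)) = emeasure M (Ti -` S)" by (rule b(5))
    moreover have "T -` (Ti -` S) = S" by auto
    ultimately show ?thesis by simp
  qed
  show "emeasure M ((T^^n) -` S) = emeasure M S"
    using assms(2)
  proof (induction n arbitrary: S)
    case (Suc n)
    have e: "(T^^Suc n) -` S = (T^^n) -` (T -` S)" by auto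
    have "T -` S \<in> sets borel" using vimT[OF Suc.prems, of 1] by simp
    then have "emeasure M ((T^^n) -` (T -` S)) = emeasure M (T -` S)" by (rule Suc.IH)
    also have "\<dots> = emeasure M S" by (rule b(5)) (rule Suc.prems)
    finally show ?case by (subst e)
  qed simp
  show "emeasure M ((Ti^^n) -` S) = emeasure M S"
    using assms(2)
  proof (induction n arbitrary: S)
    case (Suc n)
    have e: "(Ti^^Suc n) -` S = (Ti^^n) -` (Ti -` S)" by auto
    have "Ti -` S \<in> sets borel" using vimTi[OF Suc.prems, of 1] by simp
    then have "emeasure M ((Ti^^n) -` (Ti -` S)) = emeasure M (Ti -` S)" by (rule Suc.IH)
    also have "\<dots> = emeasure M S" by (rule Ti1) (rule Suc.prems)
    finally show ?case by (subst e)
  qed simp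
qed

lemma pres:
  assumes "M \<in> M_ap T" "S \<in> sets borel"
  shows "measure M ((T^^n) -` S) = measure M S" "measure M ((Ti^^n) -` S) = measure M S"
  using pres_e[OF assms] by (simp_all add: measure_def)

lemma pres_img:
  assumes "M \<in> M_ap T" "S \<in> sets borel"
  shows "measure M ((T^^n) ` S) = measure M S"
  using pres[OF assms] by (simp add: img_Tn)

definition Gset :: "'a set \<Rightarrow> 'a set" where
  "Gset A = {x. \<forall>k. (\<exists>n\<ge>k. (T^^n) x \<in> A) \<and> (\<exists>n\<ge>k. (Ti^^n) x \<in> A)}"

lemma Gset_borel: "A \<in> sets borel \<Longrightarrow> Gset A \<in> sets borel"
proof -
  assume A: "A \<in> sets borel"
  have "Gset A = (\<Inter>k. (\<Union>n\<in>{k..}. (T^^n) -` A) \<inter> (\<Union>n\<in>{k..}. (Ti^^n) -` A))"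
    unfolding Gset_def set_eq_iff by (simp add: Bex_def)
  then show ?thesis using A by (auto intro!: sets.countable_INT sets.countable_UN' vimT vimTi)
qed

lemma Gset_full:
  assumes M: "M \<in> M_ap T" and A: "A \<in> sets borel"
    and compl: "\<forall>x. x \<notin> periodic_points T \<longrightarrow> (\<exists>i. (T^^i) x \<in> A \<or> (Ti^^i) x \<in> A)"
  shows "measure M (Gset A) = 1"
proof -
  note b = Map_basic[OF M]
  interpret prob_space M by (rule b(1))
  have cov1: "x \<in> periodic_points T" if "\<forall>n. (T^^n) x \<notin> A" "\<forall>n. (Ti^^n) x \<notin> A" for x
    using compl that by blast
  have z1: "measure M {x. \<forall>n. (T^^n) x \<notin> A} = 0"
    by (rule null_forward[where g=Ti and P="periodic_points T"])
       (use b A cov1 pres[OF M] in \<open>auto intro: finite_measure_axioms\<close>)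
  have z2: "measure M {x. \<forall>n. (Ti^^n) x \<notin> A} = 0"
    by (rule null_forward[where g=T and P="periodic_points T"])
       (use b A cov1 pres[OF M] in \<open>auto intro: finite_measure_axioms\<close>)
  define F1 where "F1 = {x. \<forall>n. (T^^n) x \<notin> A}"
  define F2 where "F2 = {x. \<forall>n. (Ti^^n) x \<notin> A}"
  have F1b: "F1 \<in> sets borel"
  proof -
    have "F1 = (\<Inter>n. (T^^n) -` (- A))" unfolding F1_def by auto
    then show ?thesis using A vimT by auto
  qed
  have F2b: "F2 \<in> sets borel"
  proof -
    have "F2 = (\<Inter>n. (Ti^^n) -` (- A))" unfolding F2_def by auto
    then show ?thesis using A vimTi by auto
  qed
  have null1: "(T^^k) -` F1 \<in> null_sets M" for k
  proof -
    have "(T^^k) -` F1 \<in> sets M" using vimT[OF F1b] b by simp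
    moreover have "emeasure M ((T^^k) -` F1) = 0"
      using pres_e(1)[OF M F1b, of k] z1 emeasure_eq_measure F1_def by simp
    ultimately show ?thesis by auto
  qed
  have null2: "(Ti^^k) -` F2 \<in> null_sets M" for k
  proof -
    have "(Ti^^k) -` F2 \<in> sets M" using vimTi[OF F2b] b by simp
    moreover have "emeasure M ((Ti^^k) -` F2) = 0"
      using pres_e(2)[OF M F2b, of k] z2 emeasure_eq_measure F2_def by simp
    ultimately show ?thesis by auto
  qed
  have "- Gset A \<subseteq> (\<Union>k. (T^^k) -` F1) \<union> (\<Union>k. (Ti^^k) -` F2)"
  proof
    fix x assume "x \<in> - Gset A"
    then obtain k where "(\<forall>n\<ge>k. (T^^n) x \<notin> A) \<or> (\<forall>n\<ge>k. (Ti^^n) x \<notin> A)"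
      unfolding Gset_def by auto
    then show "x \<in> (\<Union>k. (T^^k) -` F1) \<union> (\<Union>k. (Ti^^k) -` F2)"
    proof
      assume h: "\<forall>n\<ge>k. (T^^n) x \<notin> A"
      have "(T^^k) x \<in> F1" unfolding F1_def using h by (auto simp: Tadd)
      then show ?thesis by blast
    next
      assume h: "\<forall>n\<ge>k. (Ti^^n) x \<notin> A"
      have "(Ti^^k) x \<in> F2" unfolding F2_def using h by (auto simp: funpow_add[symmetric, THEN fun_cong, simplified])
      then show ?thesis by blast
    qed
  qed
  moreover have "(\<Union>k. (T^^k) -` F1) \<union> (\<Union>k. (Ti^^k) -` F2) \<in> null_sets M"
    using null1 null2 by auto
  ultimately have "- Gset A \<in> null_sets M"
    using null_sets_subset Gset_borel[OF A] b by (metis sets.compl_sets Compl_eq_Diff_UNIV)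
  then have "measure M (- Gset A) = 0" by (simp add: measure_def null_setsD1)
  moreover have "measure M (- Gset A) = 1 - measure M (Gset A)"
    using prob_compl[of "Gset A"] Gset_borel[OF A] b by (simp add: Compl_eq_Diff_UNIV)
  ultimately show ?thesis by simp
qed

end


definition off :: "nat list \<Rightarrow> nat \<Rightarrow> nat" where
  "off d j = sum_list (take j d)"

lemma off_Suc: "j < length d \<Longrightarrow> off d (Suc j) = off d j + d ! j"
  by (simp add: off_def take_Suc_conv_app_nth)

lemma off_mono: "j \<le> j' \<Longrightarrow> off d j \<le> off d j'"
proof -
  assume "j \<le> j'"
  then have "take j d = take j (take j' d)" by (simp add: min_def)
  then have "take j' d = take j d @ drop j (take j' d)" by (metis append_take_drop_id)
  then have "sum_list (take j' d) = sum_list (take j d) + sum_list (drop j (take j' d))"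
    by (metis sum_list_append)
  then show ?thesis unfolding off_def by simp
qed

lemma off_le_sum: "off d j \<le> sum_list d"
  unfolding off_def by (metis append_take_drop_id le_add1 sum_list_append)

lemma piece_bound: "j < length d \<Longrightarrow> k < d ! j \<Longrightarrow> off d j + k < sum_list d"
proof -
  assume "j < length d" "k < d ! j"
  then have "off d j + k < off d (Suc j)" by (simp add: off_Suc)
  also have "\<dots> \<le> sum_list d" by (rule off_le_sum)
  finally show ?thesis .
qed

lemma piece_unique:
  assumes "j < length d" "k < d ! j" "j' < length d" "k' < d ! j'" "off d j + k = off d j' + k'"
  shows "j = j' \<and> k = k'"
proof -
  have lt: False if "a < b" "b < length d" "k1 < d ! a" "off d a + k1 = off d b + k2" for a b k1 k2
  proof -
    have "off d a + k1 < off d (Suc a)" using that by (simp add: off_Suc)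
    also have "\<dots> \<le> off d b" using that by (intro off_mono) simp
    finally show False using that by simp
  qed
  have "j = j'"
  proof (rule ccontr)
    assume "j \<noteq> j'"
    then have "j < j' \<or> j' < j" by arith
    then show False using lt assms by metis
  qed
  then show ?thesis using assms by simp
qed

lemma piece_exists:
  assumes "p < sum_list d"
  shows "\<exists>j k. j < length d \<and> k < d ! j \<and> p = off d j + k"
  using assms
proof (induction d arbitrary: p)
  case Nil then show ?case by simp
next
  case (Cons a d)
  show ?case
  proof (cases "p < a")
    case True
    then show ?thesis by (intro exI[of _ 0] exI[of _ p]) (simp add: off_def)
  next
    case False
    then have "p - a < sum_list d" using Cons.prems by simp
    then obtain j k where "j < length d" "k < d ! j" "p - a = off d j + k" using Cons.IH by blast
    then show ?thesis using False
      by (intro exI[of _ "Suc j"] exI[of _ k]) (simp add: off_def)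
  qed
qed


locale TW = BA +
  fixes A :: "'a set" and L :: nat and dec :: "nat \<Rightarrow> nat list" and s :: "nat set" and C :: nat
  assumes Ab: "A \<in> sets borel" and sepA: "Sep L A"
    and decp: "\<And>N. N \<ge> L \<Longrightarrow> set (dec N) \<subseteq> s \<and> sum_list (dec N) = N \<and>
                 (\<forall>j<length (dec N). dec N ! j = 1 \<longrightarrow> off (dec N) j < C)"
    and s0: "0 \<notin> s" and fins: "finite s"
    and compl: "\<forall>x. x \<notin> periodic_points T \<longrightarrow> (\<exists>i. (T^^i) x \<in> A \<or> (Ti^^i) x \<in> A)"
begin

abbreviation "G \<equiv> Gset A"
definition "Z = A \<inter> G"
definition "r z = (LEAST n. n \<ge> 1 \<and> (T^^n) z \<in> A)"

lemma T_suc: "(T^^n) (T x) = (T^^Suc n) x" by (simp add: funpow_swap1)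
lemma Ti_suc: "(Ti^^n) (Ti x) = (Ti^^Suc n) x" by (simp add: funpow_swap1)
lemma Ti_sucT: "(Ti^^Suc n) (T x) = (Ti^^n) x" by (simp only: funpow_Suc_right comp_apply Ti_T)
lemma T_sucTi: "(T^^Suc n) (Ti x) = (T^^n) x" by (simp only: funpow_Suc_right comp_apply T_Ti)

lemma G_T: "x \<in> G \<Longrightarrow> T x \<in> G"
  unfolding Gset_def
proof (safe)
  fix k assume h: "\<forall>k. (\<exists>n\<ge>k. (T ^^ n) x \<in> A) \<and> (\<exists>n\<ge>k. (Ti ^^ n) x \<in> A)"
  obtain n where n: "n \<ge> Suc k" "(T^^n) x \<in> A" using h by blast
  then have "(T^^(n - 1)) (T x) \<in> A" by (simp add: T_suc)
  then show "\<exists>n\<ge>k. (T ^^ n) (T x) \<in> A" using n(1) by (intro exI[of _ "n - 1"]) auto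
  obtain m where m: "m \<ge> k" "(Ti^^m) x \<in> A" using h by blast
  then have "(Ti^^Suc m) (T x) \<in> A" by (simp only: Ti_sucT)
  then show "\<exists>n\<ge>k. (Ti ^^ n) (T x) \<in> A" using m(1) by (intro exI[of _ "Suc m"]) auto
qed

lemma G_Ti: "x \<in> G \<Longrightarrow> Ti x \<in> G"
  unfolding Gset_def
proof (safe)
  fix k assume h: "\<forall>k. (\<exists>n\<ge>k. (T ^^ n) x \<in> A) \<and> (\<exists>n\<ge>k. (Ti ^^ n) x \<in> A)"
  obtain n where n: "n \<ge> Suc k" "(Ti^^n) x \<in> A" using h by blast
  then have "(Ti^^(n - 1)) (Ti x) \<in> A" by (simp add: Ti_suc)
  then show "\<exists>n\<ge>k. (Ti ^^ n) (Ti x) \<in> A" using n(1) by (intro exI[of _ "n - 1"]) auto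
  obtain m where m: "m \<ge> k" "(T^^m) x \<in> A" using h by blast
  then have "(T^^Suc m) (Ti x) \<in> A" by (simp only: T_sucTi)
  then show "\<exists>n\<ge>k. (T ^^ n) (Ti x) \<in> A" using m(1) by (intro exI[of _ "Suc m"]) auto
qed

lemma G_Tn: "x \<in> G \<Longrightarrow> (T^^n) x \<in> G"
  by (induction n) (auto intro: G_T)
lemma G_Tin: "x \<in> G \<Longrightarrow> (Ti^^n) x \<in> G"
  by (induction n) (auto intro: G_Ti)

lemma r_props:
  assumes "z \<in> Z"
  shows "1 \<le> r z" "(T^^r z) z \<in> A" "\<And>n. 1 \<le> n \<Longrightarrow> n < r z \<Longrightarrow> (T^^n) z \<notin> A" "r z \<ge> L"
proof -
  have ex: "\<exists>n. n \<ge> 1 \<and> (T^^n) z \<in> A" using assms unfolding Z_def Gset_def by blast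
  have l: "1 \<le> r z \<and> (T^^r z) z \<in> A" unfolding r_def by (rule LeastI_ex[OF ex])
  then show "1 \<le> r z" "(T^^r z) z \<in> A" by auto
  show nr: "\<And>n. 1 \<le> n \<Longrightarrow> n < r z \<Longrightarrow> (T^^n) z \<notin> A"
    unfolding r_def using not_less_Least by blast
  show "r z \<ge> L"
  proof (rule ccontr)
    assume "\<not> L \<le> r z"
    then have "r z \<in> {1..<L}" using l by auto
    then show False using sepA l assms unfolding Sep_def Z_def by blast
  qed
qed

lemma r_eq:
  assumes "z \<in> Z"
  shows "r z = N \<longleftrightarrow> (1 \<le> N \<and> (T^^N) z \<in> A \<and> (\<forall>n\<in>{1..<N}. (T^^n) z \<notin> A))"
proof
  assume "r z = N" then show "1 \<le> N \<and> (T^^N) z \<in> A \<and> (\<forall>n\<in>{1..<N}. (T^^n) z \<notin> A)"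
    using r_props[OF assms] by auto
next
  assume h: "1 \<le> N \<and> (T^^N) z \<in> A \<and> (\<forall>n\<in>{1..<N}. (T^^n) z \<notin> A)"
  show "r z = N" unfolding r_def
  proof (rule Least_equality)
    show "1 \<le> N \<and> (T^^N) z \<in> A" using h by auto
    fix y assume "1 \<le> y \<and> (T^^y) z \<in> A"
    then show "N \<le> y" using h by (meson atLeastLessThan_iff not_le_imp_less)
  qed
qed

lemma rep_unique_aux:
  assumes "z \<in> Z" "z' \<in> Z" "p' < r z'" "p \<le> p'" "(T^^p) z = (T^^p') z'"
  shows "z = z' \<and> p = p'"
proof -
  have "(T^^p') z' = (T^^p) ((T^^(p'-p)) z')" using assms(4) by (simp add: Tadd)
  then have zeq: "z = (T^^(p'-p)) z'" using assms(5) Tn_inj by simp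
  have "p' - p = 0"
  proof (rule ccontr)
    assume "p' - p \<noteq> 0"
    then have "1 \<le> p' - p" "p' - p < r z'" using assms(3) by auto
    then have "(T^^(p'-p)) z' \<notin> A" using r_props(3)[OF assms(2)] by blast
    then show False using zeq assms(1) unfolding Z_def by simp
  qed
  then show ?thesis using zeq assms(4) by simp
qed

lemma rep_unique:
  assumes "z \<in> Z" "z' \<in> Z" "p < r z" "p' < r z'" "(T^^p) z = (T^^p') z'"
  shows "z = z' \<and> p = p'"
proof (cases "p \<le> p'")
  case True then show ?thesis using rep_unique_aux assms by blast
next
  case False then show ?thesis using rep_unique_aux[of z' z p p'] assms by auto
qed

lemma rep_exists:
  assumes "x \<in> G"
  shows "\<exists>z\<in>Z. \<exists>p<r z. x = (T^^p) z"
proof -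
  have ex: "\<exists>n. (Ti^^n) x \<in> A" using assms unfolding Gset_def by blast
  define a where "a = (LEAST n. (Ti^^n) x \<in> A)"
  have za: "(Ti^^a) x \<in> A" unfolding a_def by (rule LeastI_ex[OF ex])
  define z where "z = (Ti^^a) x"
  have zZ: "z \<in> Z" unfolding Z_def z_def using za G_Tin[OF assms] by simp
  have xz: "x = (T^^a) z" unfolding z_def by simp
  have "a < r z"
  proof (rule ccontr)
    assume "\<not> a < r z"
    then have le: "r z \<le> a" by simp
    have gen: "\<forall>m. m \<le> a \<longrightarrow> (Ti^^a) x = (Ti^^m) ((Ti^^(a - m)) x)"
      by (simp add: funpow_add[symmetric, THEN fun_cong, simplified])
    define y where "y = (Ti^^(a - r z)) x"
    have e: "z = (Ti^^(r z)) y" using gen le z_def y_def by metis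
    have "(T^^r z) z = (Ti^^(a - r z)) x" unfolding y_def[symmetric] by (metis e Tn_Tin)
    then have "(Ti^^(a - r z)) x \<in> A" using r_props(2)[OF zZ] by simp
    moreover have "a - r z < a" using r_props(1)[OF zZ] le by simp
    ultimately show False unfolding a_def using not_less_Least by blast
  qed
  then show ?thesis using zZ xz by blast
qed

definition "pt z j k = (T^^(off (dec (r z)) j + k)) z"
definition "level h k = {pt z j k | z j. z \<in> Z \<and> j < length (dec (r z)) \<and> dec (r z) ! j = h}"
definition "B h = level h 0"

lemma pt_unique:
  assumes "z \<in> Z" "j < length (dec (r z))" "k < dec (r z) ! j"
    "z' \<in> Z" "j' < length (dec (r z'))" "k' < dec (r z') ! j'"
    "pt z j k = pt z' j' k'"
  shows "z = z' \<and> j = j' \<and> k = k'"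
proof -
  have d: "sum_list (dec (r z)) = r z" "sum_list (dec (r z')) = r z'"
    using decp r_props(4) assms(1,4) by blast+
  have "off (dec (r z)) j + k < r z" using piece_bound[OF assms(2,3)] d by simp
  moreover have "off (dec (r z')) j' + k' < r z'" using piece_bound[OF assms(5,6)] d by simp
  ultimately have e: "z = z'" "off (dec (r z)) j + k = off (dec (r z')) j' + k'"
    using rep_unique[OF assms(1,4)] assms(7) unfolding pt_def by blast+
  then show ?thesis using piece_unique[of j "dec (r z)" k j' k'] assms by simp
qed

lemma level_disj:
  assumes "k < h" "k' < h'" "(h, k) \<noteq> (h', k')"
  shows "level h k \<inter> level h' k' = {}"
proof (rule ccontr)
  assume "level h k \<inter> level h' k' \<noteq> {}"
  then obtain z j z' j' where w: "z \<in> Z" "j < length (dec (r z))" "dec (r z) ! j = h"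
     "z' \<in> Z" "j' < length (dec (r z'))" "dec (r z') ! j' = h'" "pt z j k = pt z' j' k'"
    unfolding level_def by blast
  then have "z = z' \<and> j = j' \<and> k = k'" using pt_unique[of z j k z' j' k'] assms by simp
  then show False using w assms by auto
qed

lemma T_level: "T ` level h k = level h (Suc k)"
proof -
  have "T (pt z j k) = pt z j (Suc k)" for z j by (simp add: pt_def)
  then show ?thesis unfolding level_def by (auto simp: image_iff) (metis)
qed

lemma Tn_level: "(T^^k) ` level h 0 = level h k"
proof (induction k)
  case (Suc k)
  have "(T^^Suc k) ` level h 0 = T ` ((T^^k) ` level h 0)" by (simp add: image_comp)
  then show ?case using Suc T_level by simp
qed simp

lemma tl_level: "k < h \<Longrightarrow> tower_level T (B h) k = level h k"
proof (induction k)
  case 0 then show ?case by (simp add: B_def)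
next
  case (Suc k)
  have "tower_level T (B h) (Suc k) = level h (Suc k) - level h 0"
    using Suc T_level by (simp add: B_def)
  also have "\<dots> = level h (Suc k)" using level_disj[of "Suc k" h 0 h] Suc.prems by auto
  finally show ?case .
qed

lemma full: "full_tower T h (B h)"
  unfolding full_tower_def
  using tl_level Tn_level level_disj by (auto simp: B_def)

lemma tu: "tower_union T h (B h) = (\<Union>k<h. level h k)"
  unfolding tower_union_def using tl_level by simp

lemma tu_disj: "h \<noteq> h' \<Longrightarrow> tower_union T h (B h) \<inter> tower_union T h' (B h') = {}"
  unfolding tu using level_disj by fastforce

lemma Z_G: "Z \<subseteq> G" unfolding Z_def by auto

lemma tu_union: "(\<Union>h\<in>s. tower_union T h (B h)) = G"
proof
  show "(\<Union>h\<in>s. tower_union T h (B h)) \<subseteq> G"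
    unfolding tu level_def pt_def using Z_G G_Tn by blast
  show "G \<subseteq> (\<Union>h\<in>s. tower_union T h (B h))"
  proof
    fix x assume "x \<in> G"
    then obtain z p where zp: "z \<in> Z" "p < r z" "x = (T^^p) z" using rep_exists by blast
    have d: "sum_list (dec (r z)) = r z" "set (dec (r z)) \<subseteq> s"
      using decp r_props(4)[OF zp(1)] by blast+
    obtain j k where jk: "j < length (dec (r z))" "k < dec (r z) ! j" "p = off (dec (r z)) j + k"
      using piece_exists[of p "dec (r z)"] zp(2) d(1) by auto
    have hs: "dec (r z) ! j \<in> s" using d(2) jk(1) nth_mem by blast
    have "x = pt z j k" unfolding pt_def using zp jk by simp
    then have "x \<in> level (dec (r z) ! j) k" unfolding level_def using zp jk by blast
    then show "x \<in> (\<Union>h\<in>s. tower_union T h (B h))" unfolding tu using hs jk by blast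
  qed
qed

lemma bij: "bij_betw T G G"
proof -
  have "T ` G = G"
  proof
    show "T ` G \<subseteq> G" using G_T by blast
    show "G \<subseteq> T ` G"
    proof
      fix x assume "x \<in> G"
      then have "Ti x \<in> G" by (rule G_Ti)
      then show "x \<in> T ` G" by (metis T_Ti imageI)
    qed
  qed
  then show ?thesis using injT by (metis bij_betw_def inj_on_subset subset_UNIV)
qed

end


context TW begin

definition "R N = {z \<in> Z. r z = N}"

lemma Z_borel: "Z \<in> sets borel" unfolding Z_def using Ab Gset_borel[OF Ab] by auto

lemma R_borel: "R N \<in> sets borel"
proof -
  have "R N = (if 1 \<le> N then (Z \<inter> (T^^N)-`A) - (\<Union>n\<in>{1..<N}. (T^^n)-`A) else {})"
    unfolding R_def using r_eq by auto
  then show ?thesis using Z_borel Ab by (auto intro!: sets.Diff sets.finite_UN vimT)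
qed

lemma B_eq: "B h = (\<Union>N. \<Union>j\<in>{..<length (dec N)}. if dec N ! j = h then (T^^off (dec N) j) ` R N else {})"
  unfolding B_def level_def pt_def R_def by (auto split: if_splits)

lemma B_borel: "B h \<in> sets borel"
  unfolding B_eq img_Tn by (auto intro!: sets.countable_UN sets.finite_UN vimTi R_borel)

lemma level_borel: "level h k \<in> sets borel"
  using Tn_level[of k h] B_borel[of h] unfolding B_def img_Tn by (metis vimTi)

lemma tu_borel: "tower_union T h (B h) \<in> sets borel"
  unfolding tu using level_borel by auto

context
  fixes M assumes M: "M \<in> M_ap T"
begin

lemma Mb: "prob_space M" "sets M = sets borel"
  using Map_basic[OF M] by auto

lemma mu_level: "measure M (level h k) = measure M (B h)"
  using pres_img[OF M B_borel, of k h] Tn_level[of k h] unfolding B_def by simp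

lemma mu_tu: "measure M (tower_union T h (B h)) = real h * measure M (B h)"
proof -
  interpret prob_space M by (rule Mb(1))
  have "measure M (\<Union>k\<in>{..<h}. level h k) = (\<Sum>k\<in>{..<h}. measure M (level h k))"
  proof (rule measure_finite_Union)
    show "level h ` {..<h} \<subseteq> sets M" using level_borel Mb(2) by auto
    show "disjoint_family_on (level h) {..<h}"
      unfolding disjoint_family_on_def using level_disj by auto
  qed (auto simp: emeasure_finite)
  then show ?thesis unfolding tu using mu_level by simp
qed

lemma mu_sum: "(\<Sum>h\<in>s. measure M (tower_union T h (B h))) = 1"
proof -
  interpret prob_space M by (rule Mb(1))
  have "measure M (\<Union>h\<in>s. tower_union T h (B h)) = (\<Sum>h\<in>s. measure M (tower_union T h (B h)))"
  proof (rule measure_finite_Union)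
    show "finite s" by (rule fins)
    show "(\<lambda>h. tower_union T h (B h)) ` s \<subseteq> sets M" using tu_borel Mb(2) by auto
    show "disjoint_family_on (\<lambda>h. tower_union T h (B h)) s"
      unfolding disjoint_family_on_def using tu_disj by auto
  qed (auto simp: emeasure_finite)
  then show ?thesis using tu_union Gset_full[OF M Ab compl] by simp
qed

lemma mu_B1: "real L * measure M (B 1) \<le> real C"
proof -
  interpret prob_space M by (rule Mb(1))
  have Aimg: "(T^^i) ` A \<in> sets M" for i using vimTi[OF Ab] Mb(2) by (simp add: img_Tn)
  have muA: "measure M ((T^^i) ` A) = measure M A" for i using pres_img[OF M Ab] by simp
  have "measure M (\<Union>i\<in>{..<L}. (T^^i) ` A) = (\<Sum>i\<in>{..<L}. measure M ((T^^i) ` A))"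
  proof (rule measure_finite_Union)
    show "(\<lambda>i. (T^^i) ` A) ` {..<L} \<subseteq> sets M" using Aimg by auto
    show "disjoint_family_on (\<lambda>i. (T^^i) ` A) {..<L}"
      unfolding disjoint_family_on_def
    proof (intro ballI impI)
      have aux: False if "i < i'" "i' < L" "a \<in> A" "a' \<in> A" "(T^^i) a = (T^^i') a'" for i i' a a'
      proof -
        have "(T^^i') a' = (T^^i) ((T^^(i'-i)) a')" using that by (simp add: Tadd)
        then have "a = (T^^(i'-i)) a'" using that Tn_inj by simp
        moreover have "i' - i \<in> {1..<L}" using that by auto
        ultimately show False using sepA that unfolding Sep_def by blast
      qed
      fix i i' assume "i \<in> {..<L}" "i' \<in> {..<L}" "i \<noteq> i'"
      then show "(T^^i) ` A \<inter> (T^^i') ` A = {}"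
        using aux by (auto simp: image_iff) (metis linorder_neqE_nat)+
    qed
  qed (auto simp: emeasure_finite)
  moreover have "(\<Sum>i\<in>{..<L}. measure M ((T^^i) ` A)) = real L * measure M A" using muA by simp
  moreover have "measure M (\<Union>i\<in>{..<L}. (T^^i) ` A) \<le> 1" by (rule prob_le_1)
  ultimately have LA: "real L * measure M A \<le> 1" by linarith
  have "B 1 \<subseteq> (\<Union>i\<in>{..<C}. (T^^i) ` A)"
  proof
    fix x assume "x \<in> B 1"
    then obtain z j where zj: "z \<in> Z" "j < length (dec (r z))" "dec (r z) ! j = 1" "x = pt z j 0"
      unfolding B_def level_def by blast
    have "off (dec (r z)) j < C" using decp[OF r_props(4)[OF zj(1)]] zj by blast
    moreover have "z \<in> A" using zj unfolding Z_def by simp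
    ultimately show "x \<in> (\<Union>i\<in>{..<C}. (T^^i) ` A)" using zj(4) unfolding pt_def by auto
  qed
  then have "measure M (B 1) \<le> measure M (\<Union>i\<in>{..<C}. (T^^i) ` A)"
    by (intro finite_measure_mono) (use Aimg in auto)
  also have "\<dots> \<le> (\<Sum>i\<in>{..<C}. measure M ((T^^i) ` A))"
    by (rule measure_UNION_le) (use Aimg in auto)
  also have "\<dots> = real C * measure M A" using muA by simp
  finally have "measure M (B 1) \<le> real C * measure M A" .
  then have "real L * measure M (B 1) \<le> real C * (real L * measure M A)"
    by (metis mult.left_commute mult_left_mono of_nat_0_le_iff)
  also have "\<dots> \<le> real C" using LA
    by (simp add: mult_left_le)
  finally show ?thesis .
qed

end
end


theorem lemma2:
  fixes T :: "'a::{metric_space, second_countable_topology} \<Rightarrow> 'a"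
    and s :: "nat set" and \<epsilon> :: real
  assumes "borel_automorphism T"
    and "primitive_signature s" and "\<not> trivial_signature s"
    and "\<epsilon> > 0"
  shows "\<exists>B :: nat \<Rightarrow> 'a set.
           (\<forall>h\<in>s. B h \<in> sets borel) \<and>
           (\<forall>h\<in>s. full_tower T h (B h)) \<and>
           (\<forall>h\<in>s. \<forall>h'\<in>s. h \<noteq> h' \<longrightarrow> tower_union T h (B h) \<inter> tower_union T h' (B h') = {}) \<and>
           bij_betw T (\<Union>h\<in>s. tower_union T h (B h)) (\<Union>h\<in>s. tower_union T h (B h)) \<and>
           (\<forall>M\<in>M_ap T.
              (\<Sum>h\<in>s. measure M (tower_union T h (B h))) = 1 \<and>
              (\<Sum>h\<in>s. measure M (B h)) < 1/2 + \<epsilon>)"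
proof -
  interpret BA T using assms(1) by unfold_locales
  obtain C L0 dec where dec: "\<forall>N\<ge>L0. set (dec N) \<subseteq> s \<and> sum_list (dec N) = N \<and>
           (\<forall>j<length (dec N). dec N ! j = 1 \<longrightarrow> sum_list (take j (dec N)) < (C::nat))"
    using dec_exists[OF assms(2,3)] by blast
  define L where "L = max L0 (nat (ceiling (real C / \<epsilon>)) + 1)"
  have "real C / \<epsilon> < real L" unfolding L_def by linarith
  then have LC: "real C < real L * \<epsilon>" using assms(4) by (simp add: field_simps)
  have Lpos: "real L > 0" unfolding L_def by simp
  obtain A where A: "A \<in> sets borel" "Sep L A"
      "\<forall>x. x \<notin> periodic_points T \<longrightarrow> (\<exists>i. (T^^i) x \<in> A \<or> (Ti^^i) x \<in> A)"
    using marker[of L] by blast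
  have fs: "finite s" "0 \<notin> s"
    using assms(2) by (auto simp: primitive_signature_def signature_def)
  interpret TW T A L dec s C
  proof
    fix N assume "L \<le> N"
    then have "N \<ge> L0" unfolding L_def by simp
    then show "set (dec N) \<subseteq> s \<and> sum_list (dec N) = N \<and>
                 (\<forall>j<length (dec N). dec N ! j = 1 \<longrightarrow> off (dec N) j < C)"
      using dec unfolding off_def by blast
  qed (use A fs in auto)
  show ?thesis
  proof (intro exI[of _ B] conjI ballI impI)
    show "\<And>h. B h \<in> sets borel" by (rule B_borel)
    show "\<And>h. full_tower T h (B h)" by (rule full)
    show "\<And>h h'. h \<noteq> h' \<Longrightarrow> tower_union T h (B h) \<inter> tower_union T h' (B h') = {}"
      by (rule tu_disj)
    show "bij_betw T (\<Union>h\<in>s. tower_union T h (B h)) (\<Union>h\<in>s. tower_union T h (B h))"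
      unfolding tu_union by (rule bij)
    fix M assume M: "M \<in> M_ap T"
    show "(\<Sum>h\<in>s. measure M (tower_union T h (B h))) = 1" by (rule mu_sum[OF M])
    have S1: "(\<Sum>h\<in>s. real h * measure M (B h)) = 1" using mu_sum[OF M] mu_tu[OF M] by simp
    have each: "measure M (B h) \<le> real h * measure M (B h) / 2 + (if h = 1 then measure M (B h) / 2 else 0)"
      if "h \<in> s" for h
    proof -
      have "h \<ge> 1" using that fs by (cases h) auto
      have nn: "measure M (B h) \<ge> 0" by simp
      show ?thesis
      proof (cases "h = 1")
        case True then show ?thesis by simp
      next
        case False
        then have "real h \<ge> 2" using \<open>h \<ge> 1\<close> by simp
        then have "2 * measure M (B h) \<le> real h * measure M (B h)" using nn by (rule mult_right_mono)
        then show ?thesis using False by simp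
      qed
    qed
    have "(\<Sum>h\<in>s. measure M (B h)) \<le> (\<Sum>h\<in>s. real h * measure M (B h) / 2 + (if h = 1 then measure M (B h) / 2 else 0))"
      by (rule sum_mono) (rule each)
    also have "\<dots> = (\<Sum>h\<in>s. real h * measure M (B h)) / 2 + (if 1 \<in> s then measure M (B 1) / 2 else 0)"
      using fs(1) by (simp add: sum.distrib sum_divide_distrib)
    also have "\<dots> \<le> 1/2 + measure M (B 1) / 2" using S1 by simp
    also have "\<dots> < 1/2 + \<epsilon>"
    proof -
      have "real L * measure M (B 1) < real L * \<epsilon>" using mu_B1[OF M] LC by linarith
      then have "measure M (B 1) < \<epsilon>" using Lpos by simp
      then show ?thesis using assms(4) by simp
    qed
    finally show "(\<Sum>h\<in>s. measure M (B h)) < 1/2 + \<epsilon>" .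
  qed
qed


end
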